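(* Let $(b_n)_{n\ge1}$ be a sequence of positive real numbers. Then $(\theta(M_n)-\theta(m(n)))/b_n\to0$ in probability as $n\to\infty$ if and only if, for every $\varepsilon>0$, $$n\,y_{\Theta(\varepsilon b_n+\theta(m(n)))}\to0\quad\text{and}\quad n\,y_{\Theta(-\varepsilon b_n+\theta(m(n)))}\to\infty\quad(n\to\infty).$$
   Context: Let $\{X_n,n\ge1\}$ be independent, identically distributed random variables with values in $\mathbb{Z}_+=\{0,1,2,\dots\}$ such that $p_k=P[X_1=k]>0$ for every $k\in\mathbb{Z}_+$ (set $p_m=0$ for integers $m\le -1$). For $k\in\mathbb{Z}_+$ let $y_k=\sum_{i>k}p_i$, and set $y_m=1$ for integers $m\le-1$. Let $m(t)=\min\{j\in\mathbb{Z}_+: y_j<1/t\}$ for $t>0$. For the fixed integer $\delta$ define $s_k=p_{k+\delta}/y_{k-1}$ and $\theta(k)=\sum_{i=0}^k s_i$ for $k\in\mathbb{Z}_+$, and $\theta(\infty)=\sum_{i\ge0}s_i\le\infty$. For $t\in[s_0,\theta(\infty))$ let $\Theta(t)=\max\{k\in\mathbb{Z}_+:\theta(k)\le t\}$, so that $y_{\Theta(t)}=P[\theta(X_1)>t]$; for real $t$ outside this range, $y_{\Theta(t)}$ is to be read as $P[\theta(X_1)>t]$. Let $M_n=\max\{X_1,\dots,X_n\}$ for $n\ge1$. *)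

theory Defs
  imports "HOL-Probability.Probability"
begin

text \<open>All notions are parameterised by the point masses p k = P[X_1 = k] (k a natural number)
 and the fixed integer delta.\<close>

definition pz :: "(nat \<Rightarrow> real) \<Rightarrow> int \<Rightarrow> real" where
  "pz p m = (if m < 0 then 0 else p (nat m))"

definition yz :: "(nat \<Rightarrow> real) \<Rightarrow> int \<Rightarrow> real" where
  "yz p m = (if m < 0 then 1 else (\<Sum>i. p (Suc (nat m) + i)))"

definition mt :: "(nat \<Rightarrow> real) \<Rightarrow> real \<Rightarrow> nat" where
  "mt p t = (LEAST j::nat. yz p (int j) < 1 / t)"

definition sk :: "(nat \<Rightarrow> real) \<Rightarrow> int \<Rightarrow> nat \<Rightarrow> real" where
  "sk p \<delta> k = pz p (int k + \<delta>) / yz p (int k - 1)"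

definition theta :: "(nat \<Rightarrow> real) \<Rightarrow> int \<Rightarrow> nat \<Rightarrow> real" where
  "theta p \<delta> k = (\<Sum>i\<le>k. sk p \<delta> i)"

definition theta_inf :: "(nat \<Rightarrow> real) \<Rightarrow> int \<Rightarrow> ereal" where
  "theta_inf p \<delta> = (\<Sum>i. ereal (sk p \<delta> i))"

text \<open>Theta(t) = max { k : theta(k) \<le> t } (used for t in [s_0, theta(infinity))).\<close>
definition Theta :: "(nat \<Rightarrow> real) \<Rightarrow> int \<Rightarrow> real \<Rightarrow> nat" where
  "Theta p \<delta> t = (GREATEST k::nat. theta p \<delta> k \<le> t)"

text \<open>y_{Theta(t)}: equal to y at Theta(t) for t in [s_0, theta(infinity)), and read as
 tail t = P[theta(X_1) > t] otherwise.\<close>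
definition yTheta :: "(nat \<Rightarrow> real) \<Rightarrow> int \<Rightarrow> (real \<Rightarrow> real) \<Rightarrow> real \<Rightarrow> real" where
  "yTheta p \<delta> tail t =
     (if sk p \<delta> 0 \<le> t \<and> ereal t < theta_inf p \<delta> then yz p (int (Theta p \<delta> t)) else tail t)"

end

theory Submission
  imports Defs "HOL-Real_Asymp.Real_Asymp"
begin

lemma pow_le_inv:
  fixes a :: real assumes "0 \<le> a" "a \<le> 1"
  shows "(1 - a)^n \<le> 1 / (1 + real n * a)"
proof -
  have "1 - a \<le> exp (-a)" using exp_ge_add_one_self[of "-a"] by simp
  hence "(1 - a)^n \<le> exp (-a)^n" using assms by (intro power_mono) auto
  also have "\<dots> = exp (- (real n * a))" by (simp add: exp_of_nat_mult[symmetric])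
  also have "\<dots> \<le> 1 / (1 + real n * a)"
  proof -
    have pos: "0 < 1 + real n * a" using assms by (simp add: add_pos_nonneg)
    have "1 + real n * a \<le> exp (real n * a)" by (rule exp_ge_add_one_self)
    hence "exp (- (real n * a)) * (1 + real n * a) \<le> exp (- (real n * a)) * exp (real n * a)"
      by (intro mult_left_mono) auto
    hence "exp (- (real n * a)) * (1 + real n * a) \<le> 1" by (simp add: exp_minus field_simps)
    thus ?thesis using pos by (simp add: field_simps)
  qed
  finally show ?thesis .
qed

lemma pow_ge_exp:
  fixes g :: real assumes "0 \<le> g" "g \<le> 1/2"
  shows "exp (- 2 * g * real n) \<le> (1 - g)^n"
proof -
  have "exp (-2*g) \<le> 1 - g"
  proof -
    have "1 + 2*g \<le> exp (2*g)" by (rule exp_ge_add_one_self)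
    hence "exp (-2*g) \<le> 1/(1+2*g)" using assms
      by (simp add: exp_minus field_simps)
    also have "\<dots> \<le> 1 - g"
    proof -
      have "0 \<le> g * (1 - 2*g)" using assms by (intro mult_nonneg_nonneg) auto
      hence "1 \<le> (1-g)*(1+2*g)" by (simp add: algebra_simps)
      thus ?thesis using assms by (simp add: field_simps)
    qed
    finally show ?thesis .
  qed
  hence "exp (-2*g)^n \<le> (1-g)^n" by (intro power_mono) auto
  thus ?thesis by (simp add: exp_of_nat_mult[symmetric] mult.commute mult.left_commute)
qed

lemma L1a:
  fixes a :: "nat \<Rightarrow> real" assumes "\<And>n. 0 \<le> a n" "\<And>n. a n \<le> 1"
    and "(\<lambda>n. real n * a n) \<longlonglongrightarrow> 0"
  shows "(\<lambda>n. 1 - (1 - a n)^n) \<longlonglongrightarrow> 0"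
proof (rule tendsto_sandwich[of "\<lambda>_. 0" _ _ "\<lambda>n. real n * a n"])
  show "\<forall>\<^sub>F n in sequentially. 0 \<le> 1 - (1 - a n)^n"
    by (intro always_eventually allI) (use assms in \<open>auto intro!: power_le_one\<close>)
  show "\<forall>\<^sub>F n in sequentially. 1 - (1 - a n)^n \<le> real n * a n"
    using Bernoulli_inequality[of "- a _"] assms by (auto simp: algebra_simps)
qed (use assms in auto)

lemma L1b:
  fixes a :: "nat \<Rightarrow> real" assumes "\<And>n. 0 \<le> a n" "\<And>n. a n \<le> 1"
    and "(\<lambda>n. 1 - (1 - a n)^n) \<longlonglongrightarrow> 0"
  shows "(\<lambda>n. real n * a n) \<longlonglongrightarrow> 0"
proof -
  define x where "x n = real n * a n" for n
  have x0: "x n \<ge> 0" for n using assms by (simp add: x_def)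
  have "(\<lambda>n. x n / (1 + x n)) \<longlonglongrightarrow> 0"
  proof (rule tendsto_sandwich[of "\<lambda>_. 0" _ _ "\<lambda>n. 1 - (1 - a n)^n"])
    show "\<forall>\<^sub>F n in sequentially. 0 \<le> x n / (1 + x n)" using x0 by auto
    show "\<forall>\<^sub>F n in sequentially. x n / (1 + x n) \<le> 1 - (1 - a n)^n"
    proof (intro always_eventually allI)
      fix n
      have "(1 - a n)^n \<le> 1/(1+x n)" using pow_le_inv[OF assms(1,2)] by (simp add: x_def)
      moreover have "x n / (1 + x n) = 1 - 1/(1+x n)" using x0[of n] by (simp add: field_simps)
      ultimately show "x n / (1 + x n) \<le> 1 - (1 - a n)^n" by simp
    qed
  qed (use assms in auto)
  hence "(\<lambda>n. (x n / (1 + x n)) / (1 - x n / (1 + x n))) \<longlonglongrightarrow> 0 / (1 - 0)"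
    by (intro tendsto_intros) auto
  moreover have "(x n / (1 + x n)) / (1 - x n / (1 + x n)) = x n" for n
    using x0[of n] by (simp add: field_simps)
  ultimately show ?thesis by (simp add: x_def)
qed

lemma L2a:
  fixes g :: "nat \<Rightarrow> real" assumes "\<And>n. 0 \<le> g n" "\<And>n. g n \<le> 1"
    and "filterlim (\<lambda>n. real n * g n) at_top sequentially"
  shows "(\<lambda>n. (1 - g n)^n) \<longlonglongrightarrow> 0"
proof (rule tendsto_sandwich[of "\<lambda>_. 0" _ _ "\<lambda>n. 1 / (1 + real n * g n)"])
  show "\<forall>\<^sub>F n in sequentially. 0 \<le> (1 - g n)^n" using assms by auto
  show "\<forall>\<^sub>F n in sequentially. (1 - g n)^n \<le> 1 / (1 + real n * g n)"
    using pow_le_inv[OF assms(1,2)] by auto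
  have "filterlim (\<lambda>n. 1 + real n * g n) at_top sequentially"
    by (rule filterlim_tendsto_add_at_top[OF tendsto_const assms(3)])
  thus "(\<lambda>n. 1 / (1 + real n * g n)) \<longlonglongrightarrow> 0"
    by (intro tendsto_divide_0[OF tendsto_const]) (simp add: filterlim_at_top_imp_at_infinity)
qed auto

lemma L2b:
  fixes g :: "nat \<Rightarrow> real" assumes "\<And>n. 0 \<le> g n" "\<And>n. g n \<le> 1"
    and lim: "(\<lambda>n. (1 - g n)^n) \<longlonglongrightarrow> 0"
  shows "filterlim (\<lambda>n. real n * g n) at_top sequentially"
  unfolding filterlim_at_top
proof
  fix Z :: real
  define Z' where "Z' = max Z 1"
  have "eventually (\<lambda>n. (1 - g n)^n < exp (-2*Z')) sequentially"
    using order_tendstoD(2)[OF lim, of "exp (-2*Z')"] by simp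
  moreover have "eventually (\<lambda>n. real n \<ge> 2*Z') sequentially"
    by real_asymp
  ultimately show "eventually (\<lambda>n. Z \<le> real n * g n) sequentially"
  proof eventually_elim
    case (elim n)
    show ?case
    proof (rule ccontr)
      assume "\<not> Z \<le> real n * g n"
      hence lt: "real n * g n < Z'" unfolding Z'_def by auto
      have "Z' \<ge> 1" by (simp add: Z'_def)
      hence npos: "real n > 0" using elim by auto
      have "g n \<le> 1/2"
      proof -
        have "real n * g n \<le> real n * (1/2)" using lt elim by auto
        thus ?thesis using npos by simp
      qed
      hence "exp (- 2 * g n * real n) \<le> (1 - g n)^n" using pow_ge_exp assms by blast
      moreover have "exp (-2*Z') \<le> exp (- 2 * g n * real n)"
      proof -
        have "-2*Z' \<le> - 2 * g n * real n" using lt by (simp add: mult.commute)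
        thus ?thesis by simp
      qed
      ultimately show False using elim(1) by linarith
    qed
  qed
qed

theorem corollaryA1:
  fixes M :: "'a measure" and X :: "nat \<Rightarrow> 'a \<Rightarrow> nat" and \<delta> :: int
    and b :: "nat \<Rightarrow> real"
  defines "p \<equiv> (\<lambda>k. measure M {\<omega> \<in> space M. X 1 \<omega> = k})"
  defines "tail \<equiv> (\<lambda>t. measure M {\<omega> \<in> space M. theta p \<delta> (X 1 \<omega>) > t})"
  defines "Mx \<equiv> (\<lambda>n \<omega>. Max ((\<lambda>i. X i \<omega>) ` {1..n}))"
  assumes "prob_space M"
    and meas: "\<And>i. i \<ge> 1 \<Longrightarrow> X i \<in> measurable M (count_space UNIV)"
    and indep: "prob_space.indep_vars M (\<lambda>_. count_space UNIV) X {1..}"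
    and ident: "\<And>i. i \<ge> 1 \<Longrightarrow> distr M (count_space UNIV) (X i) = distr M (count_space UNIV) (X 1)"
    and ppos: "\<And>k. p k > 0"
    and bpos: "\<And>n. n \<ge> 1 \<Longrightarrow> b n > 0"
  shows "(\<forall>\<epsilon>>0. ((\<lambda>n. measure M {\<omega> \<in> space M.
              \<bar>theta p \<delta> (Mx n \<omega>) - theta p \<delta> (mt p (real n))\<bar> / b n > \<epsilon>}) \<longlonglongrightarrow> 0))
    \<longleftrightarrow>
    (\<forall>\<epsilon>>0. ((\<lambda>n. real n * yTheta p \<delta> tail (\<epsilon> * b n + theta p \<delta> (mt p (real n)))) \<longlonglongrightarrow> 0)
        \<and> filterlim (\<lambda>n. real n * yTheta p \<delta> tail (- \<epsilon> * b n + theta p \<delta> (mt p (real n))))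
            at_top sequentially)"
  proof -
  interpret P: prob_space M by fact
  have Xset: "{\<omega>\<in>space M. Q (X i \<omega>)} \<in> sets M" if "i \<ge> 1" for i and Q :: "nat \<Rightarrow> bool"
  proof -
    have "{\<omega>\<in>space M. Q (X i \<omega>)} = X i -` {k. Q k} \<inter> space M" by auto
    thus ?thesis using measurable_sets[OF meas[OF that], of "{k. Q k}"] by simp
  qed
  have p_nonneg: "p k \<ge> 0" for k unfolding p_def by simp
  have tailsum: "(\<lambda>i. p (Suc K + i)) sums measure M {\<omega>\<in>space M. X 1 \<omega> > K}" for K
  proof -
    have "(\<lambda>i. measure M {\<omega>\<in>space M. X 1 \<omega> = Suc K + i}) sums
        measure M (\<Union>i. {\<omega>\<in>space M. X 1 \<omega> = Suc K + i})"
      by (rule P.finite_measure_UNION) (auto simp: disjoint_family_on_def intro!: Xset)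
    moreover have "(\<Union>i. {\<omega>\<in>space M. X 1 \<omega> = Suc K + i}) = {\<omega>\<in>space M. X 1 \<omega> > K}"
    proof (safe)
      fix \<omega> assume "\<omega> \<in> space M" "X 1 \<omega> > K"
      thus "\<omega> \<in> (\<Union>i. {\<omega>\<in>space M. X 1 \<omega> = Suc K + i})"
        by (intro UN_I[of "X 1 \<omega> - Suc K"]) auto
    qed auto
    ultimately show ?thesis unfolding p_def by simp
  qed
  have yz_nonneg: "yz p m \<ge> 0" for m
  proof (cases "m < 0")
    case False
    have "yz p m = measure M {\<omega>\<in>space M. X 1 \<omega> > nat m}"
      using False sums_unique[OF tailsum[of "nat m"]] by (simp add: yz_def)
    thus ?thesis by simp
  qed (simp add: yz_def)
  have sk_nonneg: "sk p \<delta> k \<ge> 0" for k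
    unfolding sk_def using yz_nonneg p_nonneg by (auto simp: pz_def intro!: divide_nonneg_nonneg)
  have th_mono: "theta p \<delta> x \<le> theta p \<delta> y" if "x \<le> y" for x y
    unfolding theta_def using that sk_nonneg by (intro sum_mono2) auto
  have tail01: "0 \<le> tail t" "tail t \<le> 1" for t unfolding tail_def by auto
  have yTheta_eq: "yTheta p \<delta> tail t = tail t" for t
  proof (cases "sk p \<delta> 0 \<le> t \<and> ereal t < theta_inf p \<delta>")
    case True
    have "theta_inf p \<delta> = (SUP n. \<Sum>i<n. ereal (sk p \<delta> i))"
      unfolding theta_inf_def by (rule suminf_ereal_eq_SUP) (simp add: sk_nonneg)
    with True have "ereal t < (SUP n. \<Sum>i<n. ereal (sk p \<delta> i))" by simp
    then obtain N where N: "ereal t < (\<Sum>i<N. ereal (sk p \<delta> i))" by (auto simp: less_SUP_iff)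
    have "N \<noteq> 0"
    proof
      assume "N = 0"
      with N have "t < 0" by simp
      moreover have "sk p \<delta> 0 \<ge> 0" by (rule sk_nonneg)
      ultimately show False using True by simp
    qed
    then obtain N' where NN: "N = Suc N'" by (cases N) auto
    have "(\<Sum>i<N. ereal (sk p \<delta> i)) = ereal (theta p \<delta> N')"
      unfolding theta_def NN lessThan_Suc_atMost by simp
    with N have tN: "t < theta p \<delta> N'" by simp
    have bnd: "k < N'" if "theta p \<delta> k \<le> t" for k
    proof (rule ccontr)
      assume "\<not> k < N'" hence "theta p \<delta> N' \<le> theta p \<delta> k" by (intro th_mono) auto
      with that tN show False by simp
    qed
    define K where "K = Theta p \<delta> t"
    have thK: "theta p \<delta> K \<le> t" unfolding K_def Theta_def
      by (rule GreatestI_nat[of _ 0 N']) (use True bnd in \<open>auto simp: theta_def less_imp_le\<close>)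
    have leK: "k \<le> K" if "theta p \<delta> k \<le> t" for k unfolding K_def Theta_def
      by (rule Greatest_le_nat[of _ k N']) (use that bnd in \<open>auto intro: less_imp_le\<close>)
    have "{\<omega>\<in>space M. theta p \<delta> (X 1 \<omega>) > t} = {\<omega>\<in>space M. X 1 \<omega> > K}"
    proof (safe)
      fix \<omega> assume "t < theta p \<delta> (X 1 \<omega>)"
      thus "K < X 1 \<omega>" using thK th_mono[of "X 1 \<omega>" K] by (metis not_le order_trans less_le_not_le)
    next
      fix \<omega> assume "K < X 1 \<omega>"
      thus "t < theta p \<delta> (X 1 \<omega>)" using leK[of "X 1 \<omega>"] by force
    qed
    hence "tail t = measure M {\<omega>\<in>space M. X 1 \<omega> > K}" unfolding tail_def by simp
    also have "\<dots> = yz p (int K)" using sums_unique[OF tailsum[of K]] by (simp add: yz_def)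
    finally show ?thesis using True unfolding yTheta_def K_def by simp
  qed (auto simp: yTheta_def)
  have Mx_le: "theta p \<delta> (Mx n \<omega>) \<le> t \<longleftrightarrow> (\<forall>i\<in>{1..n}. theta p \<delta> (X i \<omega>) \<le> t)"
    if "n \<ge> 1" for n \<omega> t
  proof -
    have ne: "(\<lambda>i. X i \<omega>) ` {1..n} \<noteq> {}" using that by auto
    have "Mx n \<omega> \<in> (\<lambda>i. X i \<omega>) ` {1..n}" unfolding Mx_def by (rule Max_in[OF _ ne]) auto
    moreover have "X i \<omega> \<le> Mx n \<omega>" if "i \<in> {1..n}" for i unfolding Mx_def
      by (rule Max_ge) (use that in auto)
    ultimately obtain j where j: "j \<in> {1..n}" "Mx n \<omega> = X j \<omega>" and
      ge: "\<And>i. i \<in> {1..n} \<Longrightarrow> theta p \<delta> (X i \<omega>) \<le> theta p \<delta> (Mx n \<omega>)"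
      using th_mono by blast
    show ?thesis
    proof
      assume "theta p \<delta> (Mx n \<omega>) \<le> t"
      thus "\<forall>i\<in>{1..n}. theta p \<delta> (X i \<omega>) \<le> t" using ge by (meson order_trans)
    next
      assume "\<forall>i\<in>{1..n}. theta p \<delta> (X i \<omega>) \<le> t"
      thus "theta p \<delta> (Mx n \<omega>) \<le> t" using j by simp
    qed
  qed
  have Mx_lt: "theta p \<delta> (Mx n \<omega>) < t \<longleftrightarrow> (\<forall>i\<in>{1..n}. theta p \<delta> (X i \<omega>) < t)"
    if "n \<ge> 1" for n \<omega> t
  proof -
    have ne: "(\<lambda>i. X i \<omega>) ` {1..n} \<noteq> {}" using that by auto
    have "Mx n \<omega> \<in> (\<lambda>i. X i \<omega>) ` {1..n}" unfolding Mx_def by (rule Max_in[OF _ ne]) auto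
    moreover have "X i \<omega> \<le> Mx n \<omega>" if "i \<in> {1..n}" for i unfolding Mx_def
      by (rule Max_ge) (use that in auto)
    ultimately obtain j where j: "j \<in> {1..n}" "Mx n \<omega> = X j \<omega>" and
      ge: "\<And>i. i \<in> {1..n} \<Longrightarrow> theta p \<delta> (X i \<omega>) \<le> theta p \<delta> (Mx n \<omega>)"
      using th_mono by blast
    show ?thesis
    proof
      assume "theta p \<delta> (Mx n \<omega>) < t"
      thus "\<forall>i\<in>{1..n}. theta p \<delta> (X i \<omega>) < t" using ge by (meson le_less_trans)
    next
      assume "\<forall>i\<in>{1..n}. theta p \<delta> (X i \<omega>) < t"
      thus "theta p \<delta> (Mx n \<omega>) < t" using j by simp
    qed
  qed
  define L where "L n t = {\<omega>\<in>space M. \<forall>i\<in>{1..n}. theta p \<delta> (X i \<omega>) \<le> t}" for n t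
  define Ls where "Ls n t = {\<omega>\<in>space M. \<forall>i\<in>{1..n}. theta p \<delta> (X i \<omega>) < t}" for n t
  have L_sets: "L n t \<in> sets M" "Ls n t \<in> sets M" for n t
  proof -
    show "L n t \<in> sets M" unfolding L_def
    proof (rule sets.sets_Collect_finite_All)
      fix i assume "i \<in> {1..n}"
      thus "{\<omega>\<in>space M. theta p \<delta> (X i \<omega>) \<le> t} \<in> sets M"
        using Xset[of i "\<lambda>k. theta p \<delta> k \<le> t"] by simp
    qed simp
    show "Ls n t \<in> sets M" unfolding Ls_def
    proof (rule sets.sets_Collect_finite_All)
      fix i assume "i \<in> {1..n}"
      thus "{\<omega>\<in>space M. theta p \<delta> (X i \<omega>) < t} \<in> sets M"
        using Xset[of i "\<lambda>k. theta p \<delta> k < t"] by simp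
    qed simp
  qed
  have probL: "measure M (L n t) = (1 - tail t)^n" if "n \<ge> 1" for n t
  proof -
    let ?A = "\<lambda>i. {\<omega>\<in>space M. theta p \<delta> (X i \<omega>) \<le> t}"
    have ie: "P.indep_events ?A {1..}"
      by (rule P.indep_eventsI_indep_vars[OF indep]) auto
    have "measure M (\<Inter>j\<in>{1..n}. ?A j) = (\<Prod>j\<in>{1..n}. measure M (?A j))"
      using ie that unfolding P.indep_events_def by (auto simp del: atLeastAtMost_iff)
    moreover have "(\<Inter>j\<in>{1..n}. ?A j) = L n t" unfolding L_def using that by auto
    moreover have "measure M (?A j) = 1 - tail t" if "j \<in> {1..n}" for j
    proof -
      have j1: "j \<ge> 1" using that by simp
      have "measure M (?A j) = measure M (X j -` {k. theta p \<delta> k \<le> t} \<inter> space M)"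
        by (rule arg_cong[where f="measure M"]) auto
      also have "\<dots> = measure (distr M (count_space UNIV) (X j)) {k. theta p \<delta> k \<le> t}"
        by (rule measure_distr[symmetric]) (use meas[OF j1] in auto)
      also have "\<dots> = measure (distr M (count_space UNIV) (X 1)) {k. theta p \<delta> k \<le> t}"
        using ident[OF j1] by simp
      also have "\<dots> = measure M (?A 1)"
        by (subst measure_distr) (use meas[of 1] in \<open>auto intro!: arg_cong[where f="measure M"]\<close>)
      also have "\<dots> = 1 - tail t"
      proof -
        have "tail t = measure M (space M - ?A 1)"
          unfolding tail_def by (rule arg_cong[where f="measure M"]) auto
        also have "\<dots> = 1 - measure M (?A 1)" by (rule P.prob_compl) (auto intro!: Xset)
        finally show ?thesis by simp
      qed
      finally show ?thesis .
    qed
    ultimately show ?thesis by simp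
  qed
  define Pr where "Pr s \<epsilon> n = measure M {\<omega> \<in> space M. \<bar>theta p \<delta> (Mx n \<omega>) - s\<bar> / b n > \<epsilon>}"
    for s \<epsilon> n
  have bounds: "1 - (1 - tail (\<epsilon> * b n + s))^n \<le> Pr s \<epsilon> n \<and>
      (1 - tail (- (2*\<epsilon>) * b n + s))^n \<le> Pr s \<epsilon> n \<and>
      Pr s \<epsilon> n \<le> (1 - (1 - tail (\<epsilon> * b n + s))^n) + (1 - tail (- \<epsilon> * b n + s))^n"
    if n1: "n \<ge> 1" and ep: "\<epsilon> > 0" for s \<epsilon> n
  proof -
    have bn: "b n > 0" using bpos n1 by simp
    define E where "E = {\<omega> \<in> space M. \<bar>theta p \<delta> (Mx n \<omega>) - s\<bar> / b n > \<epsilon>}"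
    define U where "U = space M - L n (\<epsilon> * b n + s)"
    have EE: "\<bar>theta p \<delta> (Mx n \<omega>) - s\<bar> / b n > \<epsilon> \<longleftrightarrow>
        \<not> theta p \<delta> (Mx n \<omega>) \<le> \<epsilon> * b n + s \<or> theta p \<delta> (Mx n \<omega>) < - \<epsilon> * b n + s" for \<omega>
      using bn by (auto simp: pos_less_divide_eq abs_if algebra_simps)
    have Eeq: "E = U \<union> Ls n (- \<epsilon> * b n + s)"
      unfolding E_def U_def L_def Ls_def EE by (auto simp: Mx_le[OF n1] Mx_lt[OF n1])
    have Es: "E \<in> sets M" unfolding Eeq U_def using L_sets by auto
    have PrE: "Pr s \<epsilon> n = measure M E" unfolding Pr_def E_def ..
    have PU: "measure M U = 1 - (1 - tail (\<epsilon> * b n + s))^n"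
      unfolding U_def using P.prob_compl[OF L_sets(1)] probL[OF n1] by simp
    have 1: "measure M U \<le> measure M E" by (rule P.finite_measure_mono) (use Eeq Es in auto)
    have sub2: "L n (- (2*\<epsilon>) * b n + s) \<subseteq> E"
    proof -
      have "L n (- (2*\<epsilon>) * b n + s) \<subseteq> Ls n (- \<epsilon> * b n + s)"
      proof
        fix \<omega> assume "\<omega> \<in> L n (- (2*\<epsilon>) * b n + s)"
        moreover have "\<epsilon> * b n > 0" using ep bn by simp
        ultimately show "\<omega> \<in> Ls n (- \<epsilon> * b n + s)"
          unfolding L_def Ls_def by (auto simp: algebra_simps)
      qed
      thus ?thesis using Eeq by auto
    qed
    have 2: "measure M (L n (- (2*\<epsilon>) * b n + s)) \<le> measure M E"
      by (rule P.finite_measure_mono[OF sub2 Es])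
    have "measure M E \<le> measure M U + measure M (Ls n (- \<epsilon> * b n + s))"
      unfolding Eeq by (rule measure_Un_le) (use L_sets U_def in auto)
    also have "measure M (Ls n (- \<epsilon> * b n + s)) \<le> measure M (L n (- \<epsilon> * b n + s))"
      by (rule P.finite_measure_mono[OF _ L_sets(1)]) (auto simp: L_def Ls_def less_imp_le)
    finally have 3: "measure M E \<le> measure M U + measure M (L n (- \<epsilon> * b n + s))" by simp
    show ?thesis using 1 2 3 PU probL[OF n1] PrE by simp
  qed
  define c where "c n = theta p \<delta> (mt p (real n))" for n
  have ev1: "eventually (\<lambda>n. n \<ge> (1::nat)) sequentially" by (rule eventually_ge_at_top)
  have Pr_nonneg: "Pr s \<epsilon> n \<ge> 0" for s \<epsilon> n unfolding Pr_def by simp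
  have "(\<forall>\<epsilon>>0. Pr' \<epsilon> \<longlonglongrightarrow> 0) \<longleftrightarrow>
    (\<forall>\<epsilon>>0. ((\<lambda>n. real n * tail (\<epsilon> * b n + c n)) \<longlonglongrightarrow> 0)
        \<and> filterlim (\<lambda>n. real n * tail (- \<epsilon> * b n + c n)) at_top sequentially)"
    if Pr'_def: "Pr' = (\<lambda>\<epsilon> n. Pr (c n) \<epsilon> n)" for Pr'
  proof safe
    fix \<epsilon> :: real assume H: "\<forall>\<epsilon>>0. Pr' \<epsilon> \<longlonglongrightarrow> 0" and ep: "\<epsilon> > 0"
    have "(\<lambda>n. 1 - (1 - tail (\<epsilon> * b n + c n))^n) \<longlonglongrightarrow> 0"
    proof (rule tendsto_sandwich[of "\<lambda>_. 0" _ _ "Pr' \<epsilon>"])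
      show "\<forall>\<^sub>F n in sequentially. 0 \<le> 1 - (1 - tail (\<epsilon> * b n + c n))^n"
        by (intro always_eventually allI) (use tail01 in \<open>auto intro!: power_le_one\<close>)
      show "\<forall>\<^sub>F n in sequentially. 1 - (1 - tail (\<epsilon> * b n + c n))^n \<le> Pr' \<epsilon> n"
        using ev1 by eventually_elim (use bounds ep Pr'_def in auto)
    qed (use H ep in auto)
    thus "(\<lambda>n. real n * tail (\<epsilon> * b n + c n)) \<longlonglongrightarrow> 0" by (rule L1b[OF tail01])
    have "(\<lambda>n. (1 - tail (- (2*(\<epsilon>/2)) * b n + c n))^n) \<longlonglongrightarrow> 0"
    proof (rule tendsto_sandwich[of "\<lambda>_. 0" _ _ "Pr' (\<epsilon>/2)"])
      show "\<forall>\<^sub>F n in sequentially. 0 \<le> (1 - tail (- (2*(\<epsilon>/2)) * b n + c n))^n"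
        by (intro always_eventually allI) (use tail01 in auto)
      show "\<forall>\<^sub>F n in sequentially. (1 - tail (- (2*(\<epsilon>/2)) * b n + c n))^n \<le> Pr' (\<epsilon>/2) n"
        using ev1 by eventually_elim (use bounds[of _ "\<epsilon>/2"] ep Pr'_def in auto)
    qed (use H ep in auto)
    thus "filterlim (\<lambda>n. real n * tail (- \<epsilon> * b n + c n)) at_top sequentially"
      by (intro L2b[OF tail01]) simp
  next
    fix \<epsilon> :: real
    assume H: "\<forall>\<epsilon>>0. ((\<lambda>n. real n * tail (\<epsilon> * b n + c n)) \<longlonglongrightarrow> 0)
        \<and> filterlim (\<lambda>n. real n * tail (- \<epsilon> * b n + c n)) at_top sequentially" and ep: "\<epsilon> > 0"
    have a: "(\<lambda>n. 1 - (1 - tail (\<epsilon> * b n + c n))^n) \<longlonglongrightarrow> 0"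
      by (rule L1a[OF tail01]) (use H ep in auto)
    have b: "(\<lambda>n. (1 - tail (- \<epsilon> * b n + c n))^n) \<longlonglongrightarrow> 0"
      by (rule L2a[OF tail01]) (use H ep in auto)
    show "Pr' \<epsilon> \<longlonglongrightarrow> 0"
    proof (rule tendsto_sandwich[of "\<lambda>_. 0" _ _
          "\<lambda>n. (1 - (1 - tail (\<epsilon> * b n + c n))^n) + (1 - tail (- \<epsilon> * b n + c n))^n"])
      show "\<forall>\<^sub>F n in sequentially. 0 \<le> Pr' \<epsilon> n" using Pr_nonneg Pr'_def by simp
      show "\<forall>\<^sub>F n in sequentially. Pr' \<epsilon> n \<le>
          (1 - (1 - tail (\<epsilon> * b n + c n))^n) + (1 - tail (- \<epsilon> * b n + c n))^n"
        using ev1 by eventually_elim (use bounds ep Pr'_def in auto)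
    qed (use tendsto_add[OF a b] in auto)
  qed
  from this[OF refl] show ?thesis
    unfolding yTheta_eq Pr_def c_def by simp
qed

end
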